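(* Let $f:\mathbb{R}^d\to\mathbb{R}$ be $C^2$ with $\nabla^2 f(x)\succ0$ for all $x$, and suppose there is $L_{\text{alt}}>0$ with $$f(x+h)-f(x)\le\langle\nabla f(x),h\rangle+\tfrac12\|h\|_x^2+\tfrac{L_{\text{alt}}}{6}\|h\|_x^3\quad\forall x,h\in\mathbb{R}^d.$$ Let $L_{\text{est}}\ge L_{\text{alt}}$ and let $x_{k+1}$ be the AICN iterate from $x_k$ with $\nabla f(x_k)\neq0$; write $g=\|\nabla f(x_k)\|_{x_k}^*$. Then - if $g\ge\frac{4}{L_{\text{est}}}$: $f(x_{k+1})-f(x_k)\le-\frac{1}{2\sqrt{L_{\text{est}}}}g^{3/2}$; - if $g\le\frac{4}{L_{\text{est}}}$: $f(x_{k+1})-f(x_k)\le-\frac14g^2$; - if $0<c_1\le1$ and $g\ge\frac{4c_1}{L_{\text{est}}}$: $f(x_{k+1})-f(x_k)\le-\frac{\sqrt{c_1}}{2\sqrt{L_{\text{est}}}}g^{3/2}$.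
   Context: Local norms: $\|h\|_x=\langle\nabla^2 f(x)h,h\rangle^{1/2}$, $\|g\|_x^*=\langle g,[\nabla^2 f(x)]^{-1}g\rangle^{1/2}$. AICN step with parameter $L_{\text{est}}>0$: $x_{k+1}=x_k-\alpha_k[\nabla^2 f(x_k)]^{-1}\nabla f(x_k)$ with $\alpha_k=\frac{-1+\sqrt{1+2L_{\text{est}}\|\nabla f(x_k)\|_{x_k}^*}}{L_{\text{est}}\|\nabla f(x_k)\|_{x_k}^*}$. *)

theory Defs
  imports "HOL-Analysis.Analysis"
begin

definition local_norm :: "(real^'a \<Rightarrow> real^'a^'a) \<Rightarrow> real^'a \<Rightarrow> real^'a \<Rightarrow> real" where
  "local_norm H x h = sqrt ((H x *v h) \<bullet> h)"

definition dual_norm :: "(real^'a \<Rightarrow> real^'a^'a) \<Rightarrow> real^'a \<Rightarrow> real^'a \<Rightarrow> real" where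
  "dual_norm H x g = sqrt (g \<bullet> (matrix_inv (H x) *v g))"

definition aicn_alpha :: "real \<Rightarrow> real \<Rightarrow> real" where
  "aicn_alpha L gn = (-1 + sqrt (1 + 2 * L * gn)) / (L * gn)"

definition aicn_step ::
  "(real^'a \<Rightarrow> real^'a) \<Rightarrow> (real^'a \<Rightarrow> real^'a^'a) \<Rightarrow> real \<Rightarrow> real^'a \<Rightarrow> real^'a" where
  "aicn_step G H L x =
     x - aicn_alpha L (dual_norm H x (G x)) *\<^sub>R (matrix_inv (H x) *v G x)"

end

theory Submission
  imports Defs
begin

lemma inv_prop:
  fixes A :: "real^'d^'d"
  assumes pd: "\<And>h. h \<noteq> 0 \<Longrightarrow> (A *v h) \<bullet> h > 0"
  shows "A ** matrix_inv A = mat 1"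
proof -
  have "\<forall>x. A *v x = 0 \<longrightarrow> x = 0" using pd by fastforce
  then obtain B where B: "B ** A = mat 1" using matrix_left_invertible_ker by blast
  then have "A ** B = mat 1" using matrix_left_right_inverse by blast
  with B have ex: "\<exists>A'. A ** A' = mat 1 \<and> A' ** A = mat 1" by blast
  show ?thesis unfolding matrix_inv_def using someI_ex[OF ex] by blast
qed

lemma real_part:
  fixes M gam L :: real
  assumes M: "M > 0" and gp: "gam > 0" and L: "0 < L" "L \<le> M"
    and al: "\<alpha> = aicn_alpha M gam"
  shows "0 < \<alpha>" "- \<alpha> * gam^2 + 1/2 * (\<alpha> * gam)^2 + L/6 * (\<alpha> * gam)^3 \<le> - \<alpha> * gam^2 / 2"
    "gam \<le> 4 / M \<Longrightarrow> \<alpha> \<ge> 1/2"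
    "0 < c \<Longrightarrow> c \<le> 1 \<Longrightarrow> gam \<ge> 4 * c / M \<Longrightarrow> sqrt c / sqrt M \<le> \<alpha> * sqrt gam"
proof -
  define u where "u = M * gam"
  have u: "u > 0" using M gp u_def by simp
  define s where "s = sqrt (1 + 2 * u)"
  have s2: "s^2 = 1 + 2*u" using u s_def by simp
  have s1: "s > 1" using u s_def by (simp add: real_less_rsqrt)
  have a1: "\<alpha> = (s - 1) / u" using al unfolding aicn_alpha_def s_def u_def by simp
  have a2: "\<alpha> = 2 / (1 + s)"
  proof -
    have "(s-1)*(s+1) = 2*u" using s2 by (simp add: algebra_simps power2_eq_square)
    moreover have "\<alpha> * u = s - 1" using a1 u by simp
    ultimately have "\<alpha> * (1 + s) * u = 2 * u" by (metis mult.commute mult.left_commute add.commute)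
    then have "\<alpha> * (1 + s) = 2" using u by simp
    then show ?thesis using s1 by (simp add: field_simps)
  qed
  show apos: "0 < \<alpha>" using a2 s1 by simp
  have ale: "\<alpha> \<le> 1" using a2 s1 by simp
  have key: "u * \<alpha>^2 = 2 - 2*\<alpha>"
  proof -
    have au: "\<alpha> * u = s - 1" using a1 u by simp
    have "u * (u * \<alpha>^2) = (\<alpha> * u)^2" by (simp add: power2_eq_square)
    also have "\<dots> = (s-1)^2" using au by simp
    also have "\<dots> = 2*u - 2*(s - 1)" using s2 by (simp add: power2_eq_square algebra_simps)
    also have "\<dots> = u * (2 - 2*\<alpha>)" using au by (simp add: algebra_simps)
    finally show ?thesis using u by simp
  qed
  have "L/6 * (\<alpha> * gam)^3 \<le> M/6 * (\<alpha> * gam)^3"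
    using L apos gp by (intro mult_right_mono) auto
  also have "M/6 * (\<alpha> * gam)^3 = gam^2 * (u * \<alpha>^2) * \<alpha> / 6"
    unfolding u_def by (simp add: power3_eq_cube power2_eq_square)
  also have "\<dots> = gam^2 * (2 - 2*\<alpha>) * \<alpha> / 6" using key by simp
  finally have "- \<alpha> * gam^2 + 1/2 * (\<alpha> * gam)^2 + L/6 * (\<alpha> * gam)^3
      \<le> gam^2 * (- \<alpha> * (4 - \<alpha>) / 6)"
    by (simp add: power2_eq_square algebra_simps)
  also have "\<dots> \<le> gam^2 * (-\<alpha>/2)"
    using ale apos gp by (intro mult_left_mono) (auto simp: field_simps)
  finally show "- \<alpha> * gam^2 + 1/2 * (\<alpha> * gam)^2 + L/6 * (\<alpha> * gam)^3 \<le> - \<alpha> * gam^2 / 2"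
    by (simp add: mult.commute)
  show "gam \<le> 4 / M \<Longrightarrow> \<alpha> \<ge> 1/2"
  proof -
    assume "gam \<le> 4 / M"
    then have "u \<le> 4" using M unfolding u_def by (simp add: field_simps)
    then have "1 + 2*u \<le> 3^2" by simp
    then have "sqrt (1 + 2*u) \<le> sqrt (3^2)" by (rule real_sqrt_le_mono)
    then have "s \<le> 3" unfolding s_def by simp
    then have "\<alpha> * (1 + s) \<le> \<alpha> * 4" using apos by (intro mult_left_mono) auto
    moreover have "\<alpha> * (1 + s) = 2" using a2 s1 by (simp add: field_simps)
    ultimately show ?thesis by linarith
  qed
  assume c: "0 < c" "c \<le> 1" "gam \<ge> 4 * c / M"
  then have cu: "4 * c \<le> u" using M unfolding u_def by (simp add: field_simps)
  have e1: "sqrt c \<le> sqrt u / 2"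
  proof -
    have "sqrt (4*c) \<le> sqrt u" using cu by simp
    then show ?thesis by (simp add: real_sqrt_mult)
  qed
  have e2: "sqrt c * s \<le> 3/2 * sqrt u"
  proof -
    have "c * u \<le> 1 * u" using c u by (intro mult_right_mono) auto
    then have "c * (1 + 2*u) \<le> 9/4 * u" using cu by (simp add: algebra_simps)
    then have "sqrt (c * (1 + 2*u)) \<le> sqrt (9/4 * u)" by simp
    moreover have q: "sqrt (9/4 :: real) = 3/2" by (simp add: real_sqrt_divide)
    moreover have "sqrt (9/4 * u) = sqrt (9/4) * sqrt u" by (rule real_sqrt_mult)
    moreover have "sqrt (c * (1 + 2*u)) = sqrt c * s" unfolding s_def by (rule real_sqrt_mult)
    ultimately have "sqrt c * s \<le> sqrt (9/4) * sqrt u" by simp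
    then show ?thesis by (simp only: q)
  qed
  have main: "sqrt c * (1 + s) \<le> 2 * sqrt u" using e1 e2 by (simp add: algebra_simps)
  have "\<alpha> * sqrt gam * sqrt M = 2 * sqrt u / (1 + s)"
    using a2 unfolding u_def by (simp add: real_sqrt_mult)
  then have "\<alpha> * sqrt gam * sqrt M * (1 + s) = 2 * sqrt u" using s1 by simp
  then have "sqrt c * (1 + s) \<le> \<alpha> * sqrt gam * sqrt M * (1 + s)" using main by simp
  then have "sqrt c \<le> \<alpha> * sqrt gam * sqrt M"
    by (rule mult_right_le_imp_le) (use s1 in simp)
  then show "sqrt c / sqrt M \<le> \<alpha> * sqrt gam" using M by (simp add: field_simps)
qed

theorem lemma11:
  fixes f :: "real^'d \<Rightarrow> real"
    and G :: "real^'d \<Rightarrow> real^'d"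
    and H :: "real^'d \<Rightarrow> real^'d^'d"
    and L_alt L_est :: real
    and xk :: "real^'d"
  assumes grad: "\<And>x. (f has_derivative (\<lambda>h. G x \<bullet> h)) (at x)"
    and hess: "\<And>x. (G has_derivative (\<lambda>h. H x *v h)) (at x)"
    and hess_cont: "continuous_on UNIV H"
    and pd: "\<And>x h. h \<noteq> 0 \<Longrightarrow> (H x *v h) \<bullet> h > 0"
    and L_alt_pos: "L_alt > 0"
    and upper: "\<And>x h. f (x + h) - f x \<le> G x \<bullet> h + 1/2 * (local_norm H x h)^2
                          + L_alt / 6 * (local_norm H x h)^3"
    and L_est_ge: "L_est \<ge> L_alt"
    and nz: "G xk \<noteq> 0"
  shows "(let g = dual_norm H xk (G xk); xk1 = aicn_step G H L_est xk in
           (g \<ge> 4 / L_est \<longrightarrow>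
              f xk1 - f xk \<le> - (1 / (2 * sqrt L_est)) * g powr (3/2)) \<and>
           (g \<le> 4 / L_est \<longrightarrow> f xk1 - f xk \<le> - (1/4) * g^2) \<and>
           (\<forall>c1. 0 < c1 \<and> c1 \<le> 1 \<and> g \<ge> 4 * c1 / L_est \<longrightarrow>
              f xk1 - f xk \<le> - (sqrt c1 / (2 * sqrt L_est)) * g powr (3/2)))"
proof -
  define A where "A = H xk"
  define g where "g = G xk"
  define d where "d = matrix_inv A *v g"
  have Ad: "A *v d = g" unfolding d_def
    using inv_prop[of A] pd unfolding A_def by (simp add: matrix_vector_mul_assoc)
  have dnz: "d \<noteq> 0" using Ad nz g_def by auto
  have gdpos: "g \<bullet> d > 0" using pd[OF dnz, of xk] Ad A_def by simp
  define gam where "gam = dual_norm H xk (G xk)"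
  have gam: "gam = sqrt (g \<bullet> d)" unfolding gam_def dual_norm_def g_def d_def A_def by simp
  have gp: "gam > 0" using gam gdpos by simp
  have gd: "g \<bullet> d = gam^2" using gam gdpos by simp
  have M: "L_est > 0" using L_alt_pos L_est_ge by simp
  define \<alpha> where "\<alpha> = aicn_alpha L_est gam"
  note R = real_part[OF M gp L_alt_pos L_est_ge \<alpha>_def]
  define h where "h = (- \<alpha>) *\<^sub>R d"
  have step: "aicn_step G H L_est xk = xk + h"
    unfolding aicn_step_def h_def \<alpha>_def gam_def d_def A_def g_def by simp
  have ln: "local_norm H xk h = \<alpha> * gam"
  proof -
    have "H xk *v h = (- \<alpha>) *\<^sub>R g" unfolding h_def
      using Ad A_def by (simp only: matrix_vector_mult_scaleR)
    then have "(H xk *v h) \<bullet> h = \<alpha>^2 * gam^2" unfolding h_def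
      using gd by (simp add: power2_eq_square)
    then show ?thesis unfolding local_norm_def using R(1) gp
      by (simp add: real_sqrt_mult)
  qed
  have gh: "G xk \<bullet> h = - \<alpha> * gam^2" unfolding h_def using gd g_def by simp
  have dec: "f (aicn_step G H L_est xk) - f xk \<le> - \<alpha> * gam^2 / 2"
    using upper[of xk h] R(2) unfolding step ln gh by linarith
  have pw: "gam powr (3/2) = gam * sqrt gam"
  proof -
    have "gam powr (3/2) = gam powr (1 + 1/2)" by simp
    also have "\<dots> = gam powr 1 * gam powr (1/2)" by (rule powr_add)
    also have "\<dots> = gam * sqrt gam" using gp by (simp add: powr_half_sqrt)
    finally show ?thesis .
  qed
  have c3: "f (aicn_step G H L_est xk) - f xk \<le> - (sqrt c1 / (2 * sqrt L_est)) * gam powr (3/2)"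
    if c: "0 < c1" "c1 \<le> 1" "gam \<ge> 4 * c1 / L_est" for c1
  proof -
    have b: "sqrt c1 / sqrt L_est \<le> \<alpha> * sqrt gam" using R(4)[OF c] .
    have "sqrt c1 / sqrt L_est * (gam * sqrt gam) \<le> \<alpha> * sqrt gam * (gam * sqrt gam)"
      using b gp by (intro mult_right_mono) auto
    also have "\<dots> = \<alpha> * gam^2" using gp by (simp add: power2_eq_square)
    finally have "sqrt c1 / sqrt L_est * (gam * sqrt gam) \<le> \<alpha> * gam^2" .
    moreover have "- (sqrt c1 / (2 * sqrt L_est)) * (gam * sqrt gam) = - (sqrt c1 / sqrt L_est * (gam * sqrt gam)) / 2"
      by simp
    ultimately show ?thesis using dec unfolding pw by linarith
  qed
  have c2: "f (aicn_step G H L_est xk) - f xk \<le> - (1/4) * gam^2" if "gam \<le> 4 / L_est"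
  proof -
    have "1/2 * gam^2 \<le> \<alpha> * gam^2" using R(3)[OF that]
      by (intro mult_right_mono) auto
    then show ?thesis using dec by simp
  qed
  show ?thesis
    unfolding Let_def gam_def[symmetric]
    using c2 c3[of 1] c3 by auto
qed

end
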